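(* Let $n,G$ be positive integers with $2^n$ dividing $G$, let $H=G/2^n$, and let $X=\{A\subseteq G: |A|=H\}$. For $\mathcal A\subseteq X$ define \[\|\mathcal A\|_2=\min\{|x| : x\subseteq G \text{ and } x\not\subseteq a \text{ for all } a\in\mathcal A\}.\] Let $k$ be an integer with $1\leq k\leq H$. If $\mathcal A\subseteq X$ is non-empty and $\|\mathcal A\|_2\leq k$, then \[\frac{|\mathcal A|}{|X|}\leq 1-\prod_{i=0}^{k-1}\frac{H-i}{G-i}.\] Moreover, there is a set $\mathcal A^*\subseteq X$ with $\|\mathcal A^*\|_2=k$ for which equality holds in this inequality.
   Context: Natural numbers are identified with the set of their predecessors, so $G=\{0,1,\ldots,G-1\}$ and $X$ is the family of all $H$-element subsets of $G$. *)

theory Defs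
  imports Complex_Main
begin

definition Xfam :: "nat \<Rightarrow> nat \<Rightarrow> nat set set" where
  "Xfam G H = {A. A \<subseteq> {..<G} \<and> card A = H}"

definition norm2 :: "nat \<Rightarrow> nat set set \<Rightarrow> nat" where
  "norm2 G \<A> = Min {card x | x. x \<subseteq> {..<G} \<and> (\<forall>a\<in>\<A>. \<not> x \<subseteq> a)}"

end

theory Submission
  imports Defs
begin

lemma count_sup:
  assumes "finite U" "x \<subseteq> U" "card x \<le> h"
  shows "card {a. a \<subseteq> U \<and> card a = h \<and> x \<subseteq> a} = (card U - card x) choose (h - card x)"
proof -
  have fx: "finite x" using assms finite_subset by blast
  have "bij_betw (\<lambda>a. a - x) {a. a \<subseteq> U \<and> card a = h \<and> x \<subseteq> a} {b. b \<subseteq> U - x \<and> card b = h - card x}"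
  proof (rule bij_betw_byWitness[where f' = "\<lambda>b. b \<union> x"])
    show "\<forall>a\<in>{a. a \<subseteq> U \<and> card a = h \<and> x \<subseteq> a}. a - x \<union> x = a" by blast
    show "\<forall>b\<in>{b. b \<subseteq> U - x \<and> card b = h - card x}. b \<union> x - x = b" by blast
    show "(\<lambda>a. a - x) ` {a. a \<subseteq> U \<and> card a = h \<and> x \<subseteq> a} \<subseteq> {b. b \<subseteq> U - x \<and> card b = h - card x}"
      using fx by (auto simp: card_Diff_subset)
    show "(\<lambda>b. b \<union> x) ` {b. b \<subseteq> U - x \<and> card b = h - card x} \<subseteq> {a. a \<subseteq> U \<and> card a = h \<and> x \<subseteq> a}"
    proof safe
      fix b assume b: "b \<subseteq> U - x" "card b = h - card x"
      have "finite b" using b assms finite_subset by blast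
      then have "card (b \<union> x) = card b + card x" using b fx card_Un_disjoint by blast
      then show "card (b \<union> x) = h" using b assms by simp
    qed (use assms in auto)
  qed
  then have "card {a. a \<subseteq> U \<and> card a = h \<and> x \<subseteq> a} = card {b. b \<subseteq> U - x \<and> card b = h - card x}"
    by (rule bij_betw_same_card)
  also have "\<dots> = card (U - x) choose (h - card x)" using n_subsets assms by blast
  also have "card (U - x) = card U - card x" using fx assms card_Diff_subset by blast
  finally show ?thesis .
qed

lemma ratio:
  fixes G H :: nat
  assumes "j \<le> H" "H \<le> G"
  shows "real ((G - j) choose (H - j)) = real (G choose H) * (\<Prod>i<j. (real H - real i) / (real G - real i))"
  using assms(1)
proof (induction j)
  case 0
  then show ?case by simp
next
  case (Suc j)
  have jH: "j < H" using Suc by simp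
  have e: "Suc (G - Suc j) * ((G - Suc j) choose (H - Suc j)) = (Suc (G - Suc j) choose Suc (H - Suc j)) * Suc (H - Suc j)"
    by (rule Suc_times_binomial_eq)
  have e1: "Suc (G - Suc j) = G - j" "Suc (H - Suc j) = H - j" using jH assms by auto
  have e2: "real (G - j) * real ((G - Suc j) choose (H - Suc j)) = real ((G - j) choose (H - j)) * real (H - j)"
    using e unfolding e1 by (metis of_nat_mult)
  have pos: "real G - real j > 0" using jH assms by simp
  have "real ((G - Suc j) choose (H - Suc j)) = real ((G - j) choose (H - j)) * (real H - real j) / (real G - real j)"
    using e2 jH assms pos by (simp add: field_simps of_nat_diff)
  also have "\<dots> = real (G choose H) * (\<Prod>i<j. (real H - real i) / (real G - real i)) * ((real H - real j) / (real G - real j))"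
    using Suc by simp
  finally show ?case by (simp add: mult.assoc)
qed

lemma prod_mono_k:
  fixes G H :: nat
  assumes "j \<le> k" "k \<le> H" "H < G"
  shows "(\<Prod>i<k. (real H - real i) / (real G - real i)) \<le> (\<Prod>i<j. (real H - real i) / (real G - real i))"
proof -
  let ?f = "\<lambda>i. (real H - real i) / (real G - real i)"
  have split: "{..<k} = {..<j} \<union> {j..<k}" using assms by auto
  have "(\<Prod>i<k. ?f i) = (\<Prod>i<j. ?f i) * (\<Prod>i\<in>{j..<k}. ?f i)"
    unfolding split by (subst prod.union_disjoint) auto
  moreover have "(\<Prod>i\<in>{j..<k}. ?f i) \<le> 1"
    by (rule prod_le_1) (use assms in auto)
  moreover have "(\<Prod>i<j. ?f i) \<ge> 0"
    by (rule prod_nonneg) (use assms in auto)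
  ultimately show ?thesis by (simp add: mult_left_le)
qed

theorem proposition4p9:
  fixes n G H k :: nat
  assumes "n > 0" and "G > 0" and "2 ^ n dvd G" and "H = G div 2 ^ n"
    and "1 \<le> k" and "k \<le> H"
  shows "(\<forall>\<A>. \<A> \<subseteq> Xfam G H \<and> \<A> \<noteq> {} \<and> norm2 G \<A> \<le> k \<longrightarrow>
            real (card \<A>) / real (card (Xfam G H))
              \<le> 1 - (\<Prod>i<k. (real H - real i) / (real G - real i)))
      \<and> (\<exists>\<A>s. \<A>s \<subseteq> Xfam G H \<and> norm2 G \<A>s = k \<and>
            real (card \<A>s) / real (card (Xfam G H))
              = 1 - (\<Prod>i<k. (real H - real i) / (real G - real i)))"
proof -
  let ?P = "\<lambda>j. (\<Prod>i<j. (real H - real i) / (real G - real i))"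
  have "(2::nat) ^ n \<ge> 2" using assms(1)
    by (metis One_nat_def Suc_leI power_increasing power_one_right zero_less_numeral one_le_numeral)
  then have HG: "H < G" using assms(2,4) by (simp add: div_less_dividend)
  have cX: "card (Xfam G H) = G choose H"
    unfolding Xfam_def using n_subsets[of "{..<G}" H] by simp
  have cXpos: "real (card (Xfam G H)) > 0" using cX HG by simp
  have finX: "finite (Xfam G H)" unfolding Xfam_def by (rule finite_subset[of _ "Pow {..<G}"]) auto
  define S where "S x = {a \<in> Xfam G H. x \<subseteq> a}" for x
  have cS: "real (card (S x)) = real (G choose H) * ?P (card x)" if "x \<subseteq> {..<G}" "card x \<le> H" for x
  proof -
    have "S x = {a. a \<subseteq> {..<G} \<and> card a = H \<and> x \<subseteq> a}" unfolding S_def Xfam_def by auto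
    then have "card (S x) = (G - card x) choose (H - card x)" using count_sup[OF _ that] by simp
    then show ?thesis using ratio[OF that(2)] HG by simp
  qed
  have nonin: "\<not> {..<G} \<subseteq> a" if "a \<in> Xfam G H" for a
  proof
    assume "{..<G} \<subseteq> a"
    then have "a = {..<G}" using that unfolding Xfam_def by auto
    then show False using that HG unfolding Xfam_def by auto
  qed
  have minin: "\<exists>x. x \<subseteq> {..<G} \<and> (\<forall>a\<in>\<A>. \<not> x \<subseteq> a) \<and> card x = norm2 G \<A>" if "\<A> \<subseteq> Xfam G H" for \<A>
  proof -
    let ?M = "{card x | x. x \<subseteq> {..<G} \<and> (\<forall>a\<in>\<A>. \<not> x \<subseteq> a)}"
    have "?M \<subseteq> {..G}" by (auto intro: card_mono[of "{..<G}", simplified])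
    then have "finite ?M" using finite_subset by blast
    moreover have "?M \<noteq> {}" using nonin that by blast
    ultimately have "Min ?M \<in> ?M" by (rule Min_in)
    then obtain x where x: "Min ?M = card x" "x \<subseteq> {..<G}" "\<forall>a\<in>\<A>. \<not> x \<subseteq> a" by blast
    have "norm2 G \<A> = Min ?M" by (simp only: norm2_def)
    then show ?thesis using x by metis
  qed
  have part1: "real (card \<A>) / real (card (Xfam G H)) \<le> 1 - ?P k"
    if A: "\<A> \<subseteq> Xfam G H" "\<A> \<noteq> {}" "norm2 G \<A> \<le> k" for \<A>
  proof -
    obtain x where x: "x \<subseteq> {..<G}" "\<forall>a\<in>\<A>. \<not> x \<subseteq> a" "card x = norm2 G \<A>"
      using minin[OF A(1)] by blast
    have jk: "card x \<le> k" using x A by simp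
    have "\<A> \<subseteq> Xfam G H - S x" using A x unfolding S_def by auto
    then have "card \<A> \<le> card (Xfam G H - S x)" using finX by (intro card_mono) auto
    also have "\<dots> = card (Xfam G H) - card (S x)"
      using finX by (intro card_Diff_subset) (auto simp: S_def intro: finite_subset)
    finally have "real (card \<A>) \<le> real (card (Xfam G H)) - real (card (S x))"
      using card_mono[OF finX, of "S x"] by (simp add: S_def of_nat_diff)
    also have "\<dots> = real (card (Xfam G H)) * (1 - ?P (card x))"
      using cS[OF x(1)] jk assms cX by (simp add: algebra_simps)
    also have "\<dots> \<le> real (card (Xfam G H)) * (1 - ?P k)"
      using prod_mono_k[OF jk assms(6) HG] cXpos by (intro mult_left_mono) auto
    finally show ?thesis using cXpos by (simp add: divide_le_eq mult.commute)
  qed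
  define x0 where "x0 = {..<k}"
  define As where "As = Xfam G H - S x0"
  have x0: "x0 \<subseteq> {..<G}" "card x0 = k" using assms HG unfolding x0_def by auto
  have nAs: "norm2 G As = k"
  proof -
    obtain x where x: "x \<subseteq> {..<G}" "\<forall>a\<in>As. \<not> x \<subseteq> a" "card x = norm2 G As"
      using minin[of As] unfolding As_def by blast
    have le: "norm2 G As \<le> k"
    proof -
      let ?M = "{card x | x. x \<subseteq> {..<G} \<and> (\<forall>a\<in>As. \<not> x \<subseteq> a)}"
      have "?M \<subseteq> {..G}" by (auto intro: card_mono[of "{..<G}", simplified])
      then have "finite ?M" using finite_subset by blast
      moreover have "k \<in> ?M" using x0 unfolding As_def S_def by blast
      ultimately show ?thesis unfolding norm2_def by (rule Min_le)
    qed
    have ge: "\<not> card x < k"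
    proof
      assume lt: "card x < k"
      have fx: "finite x" using x(1) finite_subset by blast
      have "\<not> x0 \<subseteq> x"
      proof
        assume "x0 \<subseteq> x" then have "card x0 \<le> card x" using fx card_mono by blast
        then show False using lt x0 by simp
      qed
      then obtain y where y: "y \<in> x0" "y \<notin> x" by blast
      have yG: "y < G" using y x0 by auto
      have "card ({..<G} - {y} - x) = G - 1 - card x"
        using x(1) y yG fx by (subst card_Diff_subset) (auto simp: card_Diff_subset)
      moreover have "H - card x \<le> G - 1 - card x" using HG by simp
      ultimately obtain b where b: "b \<subseteq> {..<G} - {y} - x" "card b = H - card x"
        by (metis finite_Diff finite_lessThan obtain_subset_with_card_n)
      have fb: "finite b" using b finite_subset by (meson finite_Diff finite_lessThan)
      have cb: "card (b \<union> x) = H"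
      proof -
        have "b \<inter> x = {}" using b(1) by blast
        then have "card (b \<union> x) = card b + card x" using fb fx card_Un_disjoint by blast
        then show ?thesis using b(2) lt assms(6) by simp
      qed
      have "b \<union> x \<in> Xfam G H" using cb b x(1) unfolding Xfam_def by auto
      moreover have "\<not> x0 \<subseteq> b \<union> x" using y b by auto
      ultimately have "b \<union> x \<in> As" unfolding As_def S_def by auto
      then show False using x(2) by auto
    qed
    show ?thesis using le ge x by simp
  qed
  have "card As = card (Xfam G H) - card (S x0)"
    unfolding As_def using finX by (intro card_Diff_subset) (auto simp: S_def intro: finite_subset)
  then have "real (card As) = real (card (Xfam G H)) - real (card (S x0))"
    using card_mono[OF finX, of "S x0"] by (simp add: S_def of_nat_diff)
  also have "\<dots> = real (card (Xfam G H)) * (1 - ?P k)"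
    using cS[OF x0(1)] x0 assms cX by (simp add: algebra_simps)
  finally have "real (card As) / real (card (Xfam G H)) = 1 - ?P k" using cXpos by simp
  moreover have "As \<subseteq> Xfam G H" unfolding As_def by auto
  ultimately show ?thesis using part1 nAs by blast
qed

end
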